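(* Let $t\in\mathbb{N}$ and let $C_1=C_1(t)$ be a constant with the property described in the context. Then there exists a constant $C_2=C_2(t)$ such that for all $\alpha_1,\ldots,\alpha_t\in\mathbb{T}$, all positive $\varepsilon\le 1/C_1(t)$, all positive $r\le 1$ and all positive integers $N$ and $U$, there is a nonempty finite set $S$ of integers satisfying (i) $U<\min S$; (ii) for all $j\le t$: $\sum_{n\in S}\|n\alpha_j\|^r\le C_2\,\dfrac{\varepsilon^r}{2^r-1}$; (iii) for all $\beta\in\mathbb{T}$: $\min\{1/6,\ \|\beta H_{N,\varepsilon}(\alpha_1,\ldots,\alpha_t)\|\}\le\|\beta S\|$.
   Context: $\mathbb{T}=\mathbb{R}/\mathbb{Z}$; $\|x\|$ is the distance from $x$ to the nearest integer. $H_{N,\varepsilon}(\alpha_1,\ldots,\alpha_t)=\{n\in\mathbb{N}, n\le N: \|n\alpha_1\|,\ldots,\|n\alpha_t\|\le\varepsilon\}$. For $\beta\in\mathbb{T}$ and a set $S$ of integers, $\|\beta S\|=\sup\{\|n\beta\|: n\in S\}$. The constant $C_1(t)$ (which exists by a result of Bir\'o and S\'os) has the property: for all $\alpha_1,\ldots,\alpha_t\in\mathbb{T}$, all positive $\varepsilon\le 1/C_1$ and all positive integers $N$ there exist $R\le C_1$, nonzero integers $n_1,\ldots,n_R$ and positive integers $K_1,\ldots,K_R$ such that (a) $\sum_{i=1}^R K_i\|n_i\alpha_j\|\le C_1\varepsilon$ for $1\le j\le t$; (b) $\sum_{i=1}^R K_i|n_i|\le C_1 N$; (c) $H_{N,\varepsilon}(\alpha_1,\ldots,\alpha_t)\subseteq\{\sum_{i=1}^R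 k_in_i: 1\le k_i\le K_i\}$. *)

theory Defs
  imports Complex_Main
begin

text \<open>Elements of the torus R/Z are represented by real representatives;
  all notions below depend only on the class modulo 1.\<close>

definition dnint :: "real \<Rightarrow> real" where
  "dnint x = \<bar>x - of_int (round x)\<bar>"

definition bohr_set :: "nat \<Rightarrow> real \<Rightarrow> nat \<Rightarrow> (nat \<Rightarrow> real) \<Rightarrow> int set" where
  "bohr_set N \<epsilon> t \<alpha> =
     {n. 1 \<le> n \<and> n \<le> int N \<and> (\<forall>j\<in>{1..t}. dnint (of_int n * \<alpha> j) \<le> \<epsilon>)}"

text \<open>||beta S|| = sup of ||n beta|| over n in S (convention: 0 for empty S).\<close>
definition set_norm :: "real \<Rightarrow> int set \<Rightarrow> real" where
  "set_norm \<beta> S = (if S = {} then 0 else Sup ((\<lambda>n. dnint (of_int n * \<beta>)) ` S))"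

definition biro_sos_const :: "nat \<Rightarrow> real \<Rightarrow> bool" where
  "biro_sos_const t C1 \<longleftrightarrow> C1 > 0 \<and>
     (\<forall>(\<alpha>::nat \<Rightarrow> real) (\<epsilon>::real) (N::nat). 0 < \<epsilon> \<and> \<epsilon> \<le> 1 / C1 \<and> 0 < N \<longrightarrow>
       (\<exists>(R::nat) (n::nat \<Rightarrow> int) (K::nat \<Rightarrow> int).
          real R \<le> C1 \<and>
          (\<forall>i\<in>{1..R}. n i \<noteq> 0 \<and> K i > 0) \<and>
          (\<forall>j\<in>{1..t}. (\<Sum>i=1..R. of_int (K i) * dnint (of_int (n i) * \<alpha> j)) \<le> C1 * \<epsilon>) \<and>
          (\<Sum>i=1..R. of_int (K i) * of_int \<bar>n i\<bar>) \<le> C1 * real N \<and>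
          bohr_set N \<epsilon> t \<alpha> \<subseteq>
            {(\<Sum>i=1..R. k i * n i) | k. \<forall>i\<in>{1..R}. 1 \<le> k i \<and> k i \<le> K i}))"

end

theory Submission
  imports Defs "HOL-Analysis.Kronecker_Approximation_Theorem"
begin


lemma dn_nonneg: "0 \<le> dnint x" by (simp add: dnint_def)
lemma dn_half: "dnint x \<le> 1/2"
  unfolding dnint_def using of_int_round_abs_le[of x] by linarith

lemma dn_le: "dnint x \<le> \<bar>x - of_int m\<bar>"
proof (cases "m = round x")
  case True then show ?thesis by (simp add: dnint_def)
next
  case False
  hence "\<bar>of_int m - of_int (round x)\<bar> \<ge> (1::real)"
  proof -
    have "\<bar>m - round x\<bar> \<ge> 1" using False by linarith
    then have "(1::real) \<le> of_int \<bar>m - round x\<bar>" by (simp only: of_int_1_le_iff)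
    then show ?thesis by simp
  qed
  then show ?thesis unfolding dnint_def using of_int_round_abs_le[of x] by linarith
qed

lemma dn_eq: "\<bar>x - of_int m\<bar> \<le> 1/2 \<Longrightarrow> dnint x = \<bar>x - of_int m\<bar>"
proof (cases "m = round x")
  case True then show ?thesis by (simp add: dnint_def)
next
  case False
  assume h: "\<bar>x - of_int m\<bar> \<le> 1/2"
  from False have "\<bar>of_int m - of_int (round x)\<bar> \<ge> (1::real)"
  proof -
    have "\<bar>m - round x\<bar> \<ge> 1" using False by linarith
    then have "(1::real) \<le> of_int \<bar>m - round x\<bar>" by (simp only: of_int_1_le_iff)
    then show ?thesis by simp
  qed
  then have "\<bar>x - of_int m\<bar> \<le> dnint x" unfolding dnint_def using h by linarith
  then show ?thesis using dn_le[of x m] by linarith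
qed

lemma dn_add: "dnint (x + y) \<le> dnint x + dnint y"
proof -
  have "dnint (x+y) \<le> \<bar>x + y - of_int (round x + round y)\<bar>" by (rule dn_le)
  also have "\<dots> \<le> dnint x + dnint y" unfolding dnint_def by simp
  finally show ?thesis .
qed

lemma dn_minus: "dnint (- x) = dnint x"
proof -
  have "dnint (-x) \<le> dnint x" using dn_le[of "-x" "- round x"] by (simp add: dnint_def)
  moreover have "dnint x \<le> dnint (-x)" using dn_le[of "x" "- round (-x)"] by (simp add: dnint_def)
  ultimately show ?thesis by simp
qed

lemma dn_diff: "dnint (x - y) \<le> dnint x + dnint y"
  using dn_add[of x "-y"] dn_minus[of y] by simp

lemma dn_shift: "dnint (x + of_int m) = dnint x"
proof -
  have "dnint (x + of_int m) \<le> dnint x" using dn_le[of "x + of_int m" "round x + m"] by (simp add: dnint_def)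
  moreover have "dnint x \<le> dnint (x + of_int m)" using dn_le[of "x" "round (x + of_int m) - m"] by (simp add: dnint_def algebra_simps)
  ultimately show ?thesis by simp
qed

lemma dn_mult: "dnint (of_int k * x) \<le> \<bar>of_int k\<bar> * dnint x"
proof -
  have "dnint (of_int k * x) \<le> \<bar>of_int k * x - of_int (k * round x)\<bar>" by (rule dn_le)
  also have "\<dots> = \<bar>of_int k\<bar> * dnint x" unfolding dnint_def by (simp add: abs_mult[symmetric] algebra_simps)
  finally show ?thesis .
qed

lemma dn_sum: "finite A \<Longrightarrow> dnint (\<Sum>i\<in>A. f i) \<le> (\<Sum>i\<in>A. dnint (f i))"
proof (induction A rule: finite_induct)
  case empty then show ?case by (simp add: dnint_def)
next
  case (insert a A)
  then show ?case using dn_add[of "f a" "sum f A"] by simp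
qed

lemma dn_abs_int: "dnint (of_int \<bar>n\<bar> * x) = dnint (of_int n * x)"
  by (cases "n \<ge> 0") (simp_all add: dn_minus[of "of_int n * x", symmetric])

lemma dn_double:
  assumes "dnint y < 1/3" "dnint (2*y) < 1/3"
  shows "dnint y \<le> dnint (2*y) / 2"
proof -
  define m where "m = round y"
  define e where "e = y - of_int m"
  have e: "\<bar>e\<bar> = dnint y" unfolding e_def m_def dnint_def by simp
  have d2: "dnint (2*y) = dnint (2*e)" unfolding e_def using dn_shift[of "2*y - 2* of_int m" "2*m"] by (simp add: algebra_simps)
  show ?thesis
  proof (cases "\<bar>2*e\<bar> \<le> 1/2")
    case True
    then have "dnint (2*e) = \<bar>2*e\<bar>" using dn_eq[of "2*e" 0] by simp
    then show ?thesis using d2 e by simp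
  next
    case False
    show ?thesis
    proof (cases "e \<ge> 0")
      case True
      then have "dnint (2*e) = \<bar>2*e - 1\<bar>" using dn_eq[of "2*e" 1] False e assms by simp
      then show ?thesis using d2 e assms False True by simp
    next
      case F2: False
      then have "dnint (2*e) = \<bar>2*e + 1\<bar>" using dn_eq[of "2*e" "-1"] False e assms by simp
      then show ?thesis using d2 e assms False F2 by simp
    qed
  qed
qed

lemma halving:
  assumes "\<And>l. l \<le> L \<Longrightarrow> dnint (2^l * y) \<le> d" "d < 1/3"
  shows "dnint y \<le> d / 2^L"
  using assms
proof (induction L arbitrary: y)
  case 0 then show ?case using "0.prems"(1)[of 0] by simp
next
  case (Suc L)
  have "dnint (2*y) \<le> d / 2^L"
    using Suc.IH[of "2*y"] Suc.prems by (simp add: mult.assoc[symmetric] power_Suc2[symmetric] del: power_Suc)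
  moreover have "dnint y \<le> d" using Suc.prems(1)[of 0] by simp
  moreover have "d / 2^L \<le> d / 1" using `dnint y \<le> d` dn_nonneg[of y]
    by (intro divide_left_mono) auto
  ultimately have "dnint y \<le> dnint (2*y) / 2" using dn_double Suc.prems(2) by fastforce
  then show ?case using `dnint (2*y) \<le> d / 2^L` by simp
qed



lemma pw_ge_self: "0 \<le> (u::real) \<Longrightarrow> u \<le> 1 \<Longrightarrow> 0 < r \<Longrightarrow> r \<le> 1 \<Longrightarrow> u \<le> u powr r"
proof (cases "u = 0")
  case False
  assume "0 \<le> u" "u \<le> 1" "0 < r" "r \<le> 1"
  then have "u powr 1 \<le> u powr r" using powr_mono'[of r 1 u] by auto
  then show ?thesis using False \<open>0 \<le> u\<close> by simp
qed simp

lemma pw_subadd: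
  fixes x y r :: real
  assumes "0 \<le> x" "0 \<le> y" "0 < r" "r \<le> 1"
  shows "(x+y) powr r \<le> x powr r + y powr r"
proof (cases "x + y = 0")
  case True then show ?thesis using assms by simp
next
  case False
  define s where "s = x + y"
  have s: "s > 0" using False assms s_def by simp
  have "x/s \<le> (x/s) powr r" using assms s by (intro pw_ge_self) (auto simp: s_def)
  moreover have "y/s \<le> (y/s) powr r" using assms s by (intro pw_ge_self) (auto simp: s_def)
  moreover have "x/s + y/s = 1" using s by (simp add: s_def add_divide_distrib[symmetric])
  ultimately have "1 \<le> (x/s) powr r + (y/s) powr r" by linarith
  also have "\<dots> = (x powr r + y powr r) / s powr r" using assms s by (simp add: powr_divide add_divide_distrib)
  finally show ?thesis using s by (simp add: s_def le_divide_eq)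
qed

lemma pw_le_1x: "0 \<le> (x::real) \<Longrightarrow> 0 < r \<Longrightarrow> r \<le> 1 \<Longrightarrow> x powr r \<le> 1 + x"
proof (cases "x \<le> 1")
  case True
  assume "0 \<le> x" "0 < r" "r \<le> 1"
  then have "x powr r \<le> 1" using True by (simp add: powr_le1)
  then show ?thesis using \<open>0 \<le> x\<close> by simp
next
  case False
  assume "0 \<le> x" "0 < r" "r \<le> 1"
  then have "x powr r \<le> x powr 1" using False by (intro powr_mono) auto
  then show ?thesis using False by simp
qed

lemma pw_geom:
  fixes a r :: real
  assumes "0 \<le> a" "0 < r"
  shows "(\<Sum>l\<in>{0..L}. (2^l*a) powr r) \<le> (2^(L+1)*a) powr r / (2 powr r - 1)"
proof -
  have q: "2 powr r > 1" using assms by simp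
  have "(\<Sum>l\<in>{0..L}. (2^l*a) powr r) = a powr r * (\<Sum>l<L+1. (2 powr r)^l)"
    by (simp add: powr_mult sum_distrib_left atLeast0AtMost lessThan_Suc_atMost powr_realpow[symmetric] powr_powr mult.commute flip: powr_power)
  also have "(\<Sum>l<L+1. (2 powr r)^l) = ((2 powr r)^(L+1) - 1) / (2 powr r - 1)"
    using q by (subst sum_gp_strict) (auto simp: field_simps)
  also have "\<dots> \<le> (2 powr r)^(L+1) / (2 powr r - 1)" using q by (simp add: divide_right_mono)
  also have "(2 powr r)^(L+1) = (2^(L+1)) powr r"
  proof -
    have "(2 powr r)^(L+1) = 2 powr (real (L+1) * r)" by (rule powr_power) simp
    also have "\<dots> = (2 powr real (L+1)) powr r" by (simp add: powr_powr)
    also have "2 powr real (L+1) = (2::real)^(L+1)" by (rule powr_realpow) simp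
    finally show ?thesis .
  qed
  finally have "(\<Sum>l\<in>{0..L}. (2^l*a) powr r) \<le> a powr r * ((2^(L+1)) powr r / (2 powr r - 1))"
    using q assms by (simp add: mult_left_mono)
  moreover have "(2^(L+1)*a) powr r / (2 powr r - 1) = a powr r * ((2^(L+1)) powr r / (2 powr r - 1))"
    using assms by (simp add: powr_mult)
  ultimately show ?thesis by linarith
qed

lemma exL: "(y::real) \<ge> 1 \<Longrightarrow> \<exists>L::nat. y \<le> 2^L \<and> 2^L \<le> 2*y"
proof -
  assume y: "y \<ge> 1"
  obtain M :: nat where "y \<le> 2^M" using real_arch_pow[of 2 y] by (auto intro: less_imp_le)
  define L where "L = (LEAST L::nat. y \<le> 2^L)"
  have L1: "y \<le> 2^L" unfolding L_def by (rule LeastI[of _ M]) fact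
  have "2^L \<le> 2*y"
  proof (cases L)
    case 0 then show ?thesis using y by simp
  next
    case (Suc K)
    then have "\<not> y \<le> 2^K" unfolding L_def using not_less_Least[of K] Suc L_def by (metis lessI)
    then show ?thesis using Suc by simp
  qed
  then show ?thesis using L1 by blast
qed



theorem lemma7:
  fixes t :: nat and C1 :: real
  assumes "biro_sos_const t C1"
  shows "\<exists>C2::real. \<forall>(\<alpha>::nat \<Rightarrow> real) (\<epsilon>::real) (r::real) (N::nat) (U::nat).
           0 < \<epsilon> \<and> \<epsilon> \<le> 1 / C1 \<and> 0 < r \<and> r \<le> 1 \<and> 0 < N \<and> 0 < U \<longrightarrow>
           (\<exists>S::int set. finite S \<and> S \<noteq> {} \<and>
              int U < Min S \<and>
              (\<forall>j\<in>{1..t}. (\<Sum>n\<in>S. dnint (of_int n * \<alpha> j) powr r)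
                              \<le> C2 * (\<epsilon> powr r / (2 powr r - 1))) \<and>
              (\<forall>\<beta>::real. min (1/6) (set_norm \<beta> (bohr_set N \<epsilon> t \<alpha>)) \<le> set_norm \<beta> S))"
proof -
  from assms have C1pos: "C1 > 0" unfolding biro_sos_const_def by auto
  note BS = assms[unfolded biro_sos_const_def, THEN conjunct2, rule_format]
  define C2 where "C2 = 1 + C1 * (1 + 8*C1*C1)"
  show ?thesis
  proof (rule exI[of _ C2], intro allI impI)
    fix \<alpha> :: "nat \<Rightarrow> real" and \<epsilon> r :: real and N U :: nat
    assume H: "0 < \<epsilon> \<and> \<epsilon> \<le> 1 / C1 \<and> 0 < r \<and> r \<le> 1 \<and> 0 < N \<and> 0 < U"
    then have ep: "0 < \<epsilon>" and r0: "0 < r" and r1: "r \<le> 1" by auto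
    obtain R n K where R: "real R \<le> C1" and nK: "\<forall>i\<in>{1..R}. n i \<noteq> 0 \<and> K i > 0"
      and sa: "\<forall>j\<in>{1..t}. (\<Sum>i=1..R. of_int (K i) * dnint (of_int (n i) * \<alpha> j)) \<le> C1 * \<epsilon>"
      and Hsub: "bohr_set N \<epsilon> t \<alpha> \<subseteq>
            {(\<Sum>i=1..R. k i * n i) | k. \<forall>i\<in>{1..R}. 1 \<le> k i \<and> k i \<le> K i}"
      using BS[of \<epsilon> N \<alpha>] H by blast
    have "\<forall>i\<in>{1..R}. \<exists>L::nat. real (2*R) * of_int (K i) \<le> 2^L \<and> 2^L \<le> 2*(real (2*R) * of_int (K i))"
    proof
      fix i assume i: "i \<in> {1..R}"
      have "0 < K i" using nK i by auto
      then have "K i \<ge> 1" by simp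
      have "R \<ge> 1" using i by auto
      note this \<open>K i \<ge> 1\<close>
      then have h1: "real (2*R) * of_int (K i) \<ge> 1*1" by (intro mult_mono) auto
      show "\<exists>L::nat. real (2*R) * of_int (K i) \<le> 2^L \<and> 2^L \<le> 2*(real (2*R) * of_int (K i))"
        by (rule exL) (use h1 in simp)
    qed
    then obtain L where L: "\<And>i. i\<in>{1..R} \<Longrightarrow> real (2*R) * of_int (K i) \<le> 2^(L i) \<and> 2^(L i) \<le> 2*(real (2*R) * of_int (K i))"
      by metis
    define Sig where "Sig = Sigma {1..R} (\<lambda>i. {0..L i})"
    have finSig: "finite Sig" unfolding Sig_def by auto
    define c where "c = 1 + card Sig"
    define \<eta> where "\<eta> = \<epsilon> * real c powr (-1/r)"
    have eta0: "\<eta> > 0" unfolding \<eta>_def c_def using ep by simp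
    have etar: "real c * \<eta> powr r = \<epsilon> powr r"
    proof -
      have "\<eta> powr r = \<epsilon> powr r * real c powr (-1/r * r)"
        unfolding \<eta>_def using ep by (simp add: powr_mult powr_powr)
      also have "-1/r * r = -1" using r0 by simp
      finally show ?thesis unfolding c_def by (simp add: powr_minus)
    qed
    obtain X :: int where XU: "int U < X" and Xa: "\<forall>j\<in>{1..t}. dnint (of_int X * \<alpha> j) \<le> \<eta>"
    proof -
      define M :: nat where "M = nat \<lceil>real (U+1) / \<eta>\<rceil> + 1"
      have M0: "M > 0" by (simp add: M_def)
      have "real (U+1) / \<eta> \<le> of_int \<lceil>real (U+1) / \<eta>\<rceil>" by simp
      also have "\<dots> \<le> real (nat \<lceil>real (U+1) / \<eta>\<rceil>)" by simp
      finally have MM: "real (U+1) / \<eta> \<le> real M" unfolding M_def by simp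
      have UM: "real (U+1) / real M \<le> \<eta>"
        using MM eta0 M0 by (simp add: divide_le_eq mult.commute)
      obtain q p where q: "0<q" and "q \<le> int (M^Suc t)" and qp: "\<And>i. i < Suc t \<Longrightarrow> \<bar>of_int q * \<alpha> i - of_int (p i)\<bar> < 1/M"
        by (rule Dirichlet_approx_simult[OF M0, where \<theta>=\<alpha> and n="Suc t"]) blast
      define X where "X = int (U+1) * q"
      show ?thesis
      proof (rule that[of X])
        have "int U + 1 \<le> (int U + 1) * q" using q by simp
        moreover have "X = (int U + 1) * q" unfolding X_def by simp
        ultimately show "int U < X" by linarith
        show "\<forall>j\<in>{1..t}. dnint (of_int X * \<alpha> j) \<le> \<eta>"
        proof
          fix j assume j: "j \<in> {1..t}"
          have "dnint (of_int X * \<alpha> j) = dnint (of_int (int (U+1)) * (of_int q * \<alpha> j))"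
            unfolding X_def by (simp add: mult.assoc)
          also have "\<dots> \<le> \<bar>of_int (int (U+1))\<bar> * dnint (of_int q * \<alpha> j)" by (rule dn_mult)
          also have "\<dots> \<le> real (U+1) * (1 / M)"
          proof -
            have "dnint (of_int q * \<alpha> j) \<le> 1/M"
              using dn_le[of "of_int q * \<alpha> j" "p j"] qp[of j] j by force
            then have "real (U+1) * dnint (of_int q * \<alpha> j) \<le> real (U+1) * (1/M)"
              by (intro mult_left_mono) auto
            then show ?thesis by simp
          qed
          also have "\<dots> \<le> \<eta>" using UM by simp
          finally show "dnint (of_int X * \<alpha> j) \<le> \<eta>" .
        qed
      qed
    qed
    define g :: "nat \<times> nat \<Rightarrow> int" where "g = (\<lambda>(i,l). X + 2^l * \<bar>n i\<bar>)"
    define S where "S = insert X (g ` Sig)"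
    have finS: "finite S" unfolding S_def using finSig by simp
    have Sne: "S \<noteq> {}" unfolding S_def by simp
    have gX: "X < g p" if "p \<in> Sig" for p
    proof -
      obtain i l where p: "p = (i,l)" "i \<in> {1..R}" using \<open>p \<in> Sig\<close> unfolding Sig_def by auto
      have "n i \<noteq> 0" using nK p by auto
      then have "\<bar>n i\<bar> \<ge> 1" by linarith
      moreover have "(2::int)^l \<ge> 1" by simp
      ultimately have "2^l * \<bar>n i\<bar> \<ge> (1::int) * 1" by (intro mult_mono) auto
      then show ?thesis using p unfolding g_def by simp
    qed
    have MinS: "Min S = X"
      by (rule Min_eqI) (use finS gX in \<open>auto simp: S_def intro: less_imp_le\<close>)
    have q0: "2 powr r - 1 > 0" using r0 by simp
    have q1: "2 powr r - 1 \<le> 1"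
    proof -
      have "2 powr r \<le> 2 powr (1::real)" using r1 by (intro powr_mono) auto
      then show ?thesis by simp
    qed
    have part2: "\<forall>j\<in>{1..t}. (\<Sum>s\<in>S. dnint (of_int s * \<alpha> j) powr r) \<le> C2 * (\<epsilon> powr r / (2 powr r - 1))"
    proof
      fix j assume j: "j \<in> {1..t}"
      define f where "f = (\<lambda>s::int. dnint (of_int s * \<alpha> j) powr r)"
      define a where "a = (\<lambda>i. dnint (of_int (n i) * \<alpha> j))"
      define q where "q = 2 powr r - 1"
      have f0: "0 \<le> f s" for s unfolding f_def by simp
      have fX: "f X \<le> \<eta> powr r" unfolding f_def using Xa j r0 dn_nonneg by (intro powr_mono2) auto
      have fg: "f (g (i,l)) \<le> \<eta> powr r + (2^l * a i) powr r" if "i \<in> {1..R}" for i l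
      proof -
        have "dnint (of_int (g (i,l)) * \<alpha> j) = dnint (of_int X * \<alpha> j + of_int (2^l) * (of_int \<bar>n i\<bar> * \<alpha> j))"
          unfolding g_def by (simp add: algebra_simps)
        also have "\<dots> \<le> dnint (of_int X * \<alpha> j) + dnint (of_int (2^l) * (of_int \<bar>n i\<bar> * \<alpha> j))" by (rule dn_add)
        also have "\<dots> \<le> \<eta> + 2^l * a i"
          using bspec[OF Xa j] dn_mult[of "2^l" "of_int \<bar>n i\<bar> * \<alpha> j"] dn_abs_int[of "n i" "\<alpha> j"] unfolding a_def by simp
        finally have "dnint (of_int (g (i,l)) * \<alpha> j) powr r \<le> (\<eta> + 2^l * a i) powr r"
          using r0 dn_nonneg by (intro powr_mono2) auto
        also have "\<dots> \<le> \<eta> powr r + (2^l * a i) powr r"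
          using eta0 r0 r1 by (intro pw_subadd) (auto simp: a_def dn_nonneg)
        finally show ?thesis unfolding f_def .
      qed
      have inner: "(\<Sum>l\<in>{0..L i}. (2^l * a i) powr r) \<le> (1 + 8*C1*C1) * (\<epsilon> powr r / q)" if i: "i \<in> {1..R}" for i
      proof -
        have a0: "0 \<le> a i" by (simp add: a_def dn_nonneg)
        have Ka: "of_int (K i) * a i \<le> C1 * \<epsilon>"
        proof -
          have "of_int (K i) * a i \<le> (\<Sum>i=1..R. of_int (K i) * dnint (of_int (n i) * \<alpha> j))"
            unfolding a_def using i nK by (intro member_le_sum) (auto intro!: mult_nonneg_nonneg simp: dn_nonneg less_imp_le)
          then show ?thesis using bspec[OF sa j] by linarith
        qed
        have "(\<Sum>l\<in>{0..L i}. (2^l * a i) powr r) \<le> (2^(L i+1) * a i) powr r / q"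
          unfolding q_def using pw_geom[OF a0 r0] .
        also have "2^(L i+1) * a i \<le> 8*C1*C1*\<epsilon>"
        proof -
          have "2^(L i+1) * a i = 2 * 2^(L i) * a i" by simp
          also have "\<dots> \<le> 2 * (2*(real (2*R) * of_int (K i))) * a i"
            using L[OF i] a0 by (intro mult_right_mono) auto
          also have "\<dots> = 8 * real R * (of_int (K i) * a i)" by simp
          also have "\<dots> \<le> 8 * C1 * (C1 * \<epsilon>)"
          proof (rule mult_mono)
            have "0 < K i" using nK i by auto
            then show "0 \<le> of_int (K i) * a i" using a0 by simp
          qed (use R Ka C1pos in auto)
          finally show ?thesis by simp
        qed
        then have "(2^(L i+1) * a i) powr r / q \<le> (8*C1*C1*\<epsilon>) powr r / q"
          unfolding q_def by (intro divide_right_mono powr_mono2) (use a0 r0 in auto, use q0 in linarith)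
        also have "(8*C1*C1*\<epsilon>) powr r = (8*C1*C1) powr r * \<epsilon> powr r"
          using C1pos ep by (simp add: powr_mult)
        also have "(8*C1*C1) powr r \<le> 1 + 8*C1*C1" using C1pos r0 r1 by (intro pw_le_1x) auto
        then have "(8*C1*C1) powr r * \<epsilon> powr r / q \<le> (1 + 8*C1*C1) * (\<epsilon> powr r / q)"
          using q0 unfolding q_def by (simp add: divide_right_mono mult_right_mono)
        finally show ?thesis .
      qed
      have "(\<Sum>s\<in>S. f s) \<le> f X + (\<Sum>s\<in>g ` Sig. f s)"
        unfolding S_def using finSig f0 by (simp add: sum.insert_if)
      also have "(\<Sum>s\<in>g ` Sig. f s) \<le> (\<Sum>p\<in>Sig. f (g p))"
        using sum_image_le[OF finSig, of f g] f0 by (simp add: o_def)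
      also have "(\<Sum>p\<in>Sig. f (g p)) \<le> (\<Sum>p\<in>Sig. \<eta> powr r + (2^(snd p) * a (fst p)) powr r)"
        by (intro sum_mono) (auto simp: Sig_def intro!: fg)
      also have "\<dots> = card Sig * \<eta> powr r + (\<Sum>p\<in>Sig. (2^(snd p) * a (fst p)) powr r)"
        by (simp add: sum.distrib)
      also have "(\<Sum>p\<in>Sig. (2^(snd p) * a (fst p)) powr r) = (\<Sum>i\<in>{1..R}. \<Sum>l\<in>{0..L i}. (2^l * a i) powr r)"
        unfolding Sig_def by (subst sum.Sigma) (auto simp: split_def)
      also have "(\<Sum>i\<in>{1..R}. \<Sum>l\<in>{0..L i}. (2^l * a i) powr r) \<le> (\<Sum>i\<in>{1..R}. (1 + 8*C1*C1) * (\<epsilon> powr r / q))"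
        by (intro sum_mono inner)
      also have "\<dots> = real R * ((1 + 8*C1*C1) * (\<epsilon> powr r / q))" by simp
      also have "\<dots> \<le> C1 * ((1 + 8*C1*C1) * (\<epsilon> powr r / q))"
        using R q0 C1pos unfolding q_def by (intro mult_right_mono) auto
      finally have "(\<Sum>s\<in>S. f s) \<le> (f X + card Sig * \<eta> powr r) + C1 * ((1 + 8*C1*C1) * (\<epsilon> powr r / q))"
        by simp
      moreover have "f X + card Sig * \<eta> powr r \<le> \<epsilon> powr r / q"
      proof -
        have "f X + card Sig * \<eta> powr r \<le> real c * \<eta> powr r" using fX unfolding c_def by (simp add: algebra_simps)
        also have "\<dots> = \<epsilon> powr r" by (rule etar)
        also have "\<dots> \<le> \<epsilon> powr r / q"
        proof -
          have qq: "q > 0" "q \<le> 1" using q0 q1 by (simp_all add: q_def)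
          have "\<epsilon> powr r * q \<le> \<epsilon> powr r * 1" using qq by (intro mult_left_mono) auto
          then show ?thesis using qq by (simp add: le_divide_eq)
        qed
        finally show ?thesis .
      qed
      ultimately have A: "(\<Sum>s\<in>S. f s) \<le> \<epsilon> powr r / q + C1 * ((1 + 8*C1*C1) * (\<epsilon> powr r / q))"
        by linarith
      have B: "\<epsilon> powr r / q + C1 * ((1 + 8*C1*C1) * (\<epsilon> powr r / q)) = C2 * (\<epsilon> powr r / q)"
        unfolding C2_def by (simp add: algebra_simps)
      from A B have "(\<Sum>s\<in>S. f s) \<le> C2 * (\<epsilon> powr r / q)" by linarith
      then show "(\<Sum>s\<in>S. dnint (of_int s * \<alpha> j) powr r) \<le> C2 * (\<epsilon> powr r / (2 powr r - 1))"
        unfolding f_def q_def .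
    qed
    have part3: "\<forall>\<beta>::real. min (1/6) (set_norm \<beta> (bohr_set N \<epsilon> t \<alpha>)) \<le> set_norm \<beta> S"
    proof
      fix \<beta> :: real
      define \<delta> where "\<delta> = set_norm \<beta> S"
      have Sd: "dnint (of_int s * \<beta>) \<le> \<delta>" if "s \<in> S" for s
        unfolding \<delta>_def set_norm_def using Sne finS that
        by (auto intro!: cSup_upper bdd_above_finite)
      have d0: "0 \<le> \<delta>" using Sd[of X] dn_nonneg[of "of_int X * \<beta>"] by (simp add: S_def)
      show "min (1/6) (set_norm \<beta> (bohr_set N \<epsilon> t \<alpha>)) \<le> set_norm \<beta> S"
      proof (cases "\<delta> < 1/6")
        case False then show ?thesis unfolding \<delta>_def by simp
      next
        case True
        have key: "dnint (of_int (n i) * \<beta>) \<le> 2*\<delta> / 2^(L i)" if i: "i \<in> {1..R}" for i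
        proof -
          have "dnint (2^l * (of_int \<bar>n i\<bar> * \<beta>)) \<le> 2*\<delta>" if l: "l \<le> L i" for l
          proof -
            have gS: "g (i,l) \<in> S" unfolding S_def Sig_def using i l by auto
            have "2^l * (of_int \<bar>n i\<bar> * \<beta>) = of_int (g (i,l)) * \<beta> - of_int X * \<beta>"
              unfolding g_def by (simp add: algebra_simps)
            then have "dnint (2^l * (of_int \<bar>n i\<bar> * \<beta>)) \<le> dnint (of_int (g (i,l)) * \<beta>) + dnint (of_int X * \<beta>)"
              using dn_diff by simp
            also have "\<dots> \<le> 2*\<delta>" using Sd[OF gS] Sd[of X] by (simp add: S_def)
            finally show ?thesis .
          qed
          then have "dnint (of_int \<bar>n i\<bar> * \<beta>) \<le> 2*\<delta> / 2^(L i)"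
            using True by (intro halving) auto
          then show ?thesis using dn_abs_int[of "n i" \<beta>] by simp
        qed
        have "set_norm \<beta> (bohr_set N \<epsilon> t \<alpha>) \<le> \<delta>"
        proof (cases "bohr_set N \<epsilon> t \<alpha> = {}")
          case True then show ?thesis using d0 by (simp add: set_norm_def)
        next
          case False
          have "dnint (of_int h * \<beta>) \<le> \<delta>" if h: "h \<in> bohr_set N \<epsilon> t \<alpha>" for h
          proof -
            obtain k where hk: "h = (\<Sum>i=1..R. k i * n i)" and k: "\<forall>i\<in>{1..R}. 1 \<le> k i \<and> k i \<le> K i"
              using Hsub h by blast
            have "of_int h * \<beta> = (\<Sum>i=1..R. of_int (k i) * (of_int (n i) * \<beta>))"
              unfolding hk by (simp add: of_int_sum sum_distrib_right mult.assoc)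
            then have "dnint (of_int h * \<beta>) \<le> (\<Sum>i=1..R. dnint (of_int (k i) * (of_int (n i) * \<beta>)))"
              using dn_sum[of "{1..R}"] by simp
            also have "\<dots> \<le> (\<Sum>i=1..R. \<delta> / real R)"
            proof (intro sum_mono)
              fix i assume i: "i \<in> {1..R}"
              have Rp: "real R > 0" using i by auto
              have Kp: "of_int (K i) > (0::real)" using nK i by auto
              have "dnint (of_int (k i) * (of_int (n i) * \<beta>)) \<le> \<bar>of_int (k i)\<bar> * dnint (of_int (n i) * \<beta>)"
                by (rule dn_mult)
              also have "\<dots> \<le> of_int (K i) * (2*\<delta> / 2^(L i))"
              proof (rule mult_mono)
                have "1 \<le> k i" "k i \<le> K i" using k i by auto
                then show "\<bar>of_int (k i)\<bar> \<le> (of_int (K i)::real)" by simp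
                show "0 \<le> (of_int (K i)::real)" using Kp by simp
              qed (use key[OF i] dn_nonneg in auto)
              also have "\<dots> \<le> of_int (K i) * (2*\<delta> / (real (2*R) * of_int (K i)))"
                using L[OF i] d0 Kp Rp by (intro mult_left_mono divide_left_mono) auto
              also have "\<dots> = \<delta> / real R" using Kp Rp by (simp add: field_simps)
              finally show "dnint (of_int (k i) * (of_int (n i) * \<beta>)) \<le> \<delta> / real R" .
            qed
            also have "\<dots> \<le> \<delta>" using d0 by (cases "R = 0") auto
            finally show ?thesis .
          qed
          then show ?thesis using False unfolding set_norm_def
            by (auto intro!: cSup_least)
        qed
        then show ?thesis unfolding \<delta>_def by (simp add: min_le_iff_disj)
      qed
    qed
    show "\<exists>S::int set. finite S \<and> S \<noteq> {} \<and> int U < Min S \<and>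
              (\<forall>j\<in>{1..t}. (\<Sum>n\<in>S. dnint (of_int n * \<alpha> j) powr r)
                              \<le> C2 * (\<epsilon> powr r / (2 powr r - 1))) \<and>
              (\<forall>\<beta>::real. min (1/6) (set_norm \<beta> (bohr_set N \<epsilon> t \<alpha>)) \<le> set_norm \<beta> S)"
      using finS Sne MinS XU part2 part3 by auto
  qed
qed

end
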